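(* Let $G=(V,E)$ be a simple connected graph with $N\ge 2$ nodes, and let $\tilde{L}_\tau$ denote either its Mellin transformed $d$-path Laplacian $\tilde{L}_{\mathrm{Mell}}=\sum_{d=1}^{d_{max}} d^{-s}L_d$ (with parameter $s>0$) or its Laplace transformed $d$-path Laplacian $\tilde{L}_{\mathrm{Lapl}}=L+\sum_{d=2}^{d_{max}} e^{-\lambda d}L_d$ (with parameter $\lambda>0$). Define the generalized eigenratio $Q_\tau=\lambda_2(\tilde{L}_\tau)/\lambda_N(\tilde{L}_\tau)$ and the eigenratio of the graph $Q=\lambda_2(L)/\lambda_N(L)$. Then $Q_\tau\to Q$ as $s\to\infty$ (respectively $\lambda\to\infty$), and $Q_\tau\to 1$ as $s\to 0$ (respectively $\lambda\to 0$).
   Context: For a simple connected graph $G=(V,E)$ with $N$ nodes, $d_{ij}$ denotes the shortest-path distance between nodes $i$ and $j$ and $d_{max}$ the diameter. $L$ is the usual graph Laplacian ($L_{ii}=k_i$ the degree, $L_{ij}=-1$ if $(i,j)\in E$, $0$ otherwise). For $1\le d\le d_{max}$, the $d$-path Laplacian $L_d$ is the $N\times N$ matrix with $(L_d)_{ij}=-1$ if $i\neq j$ and $d_{ij}=d$, $(L_d)_{ij}=0$ if $i\ne j$ and $d_{ij}\neq d$, and $(L_d)_{ii}$ equal to the number of nodes $j$ with $d_{ij}=d$; thus $L_1=L$. For a symmetric positive semidefinite matrix $M$ of this Laplacian type, $0=\lambda_1(M)\le\lambda_2(M)\le\cdots\le\lambda_N(M)$ denote its eigenvalues in increasing order. 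*)

theory Defs
  imports "Jordan_Normal_Form.Char_Poly" "HOL-Computational_Algebra.Polynomial"
    "HOL-Library.Multiset" Complex_Main
begin

definition simple_graph :: "nat \<Rightarrow> (nat \<Rightarrow> nat \<Rightarrow> bool) \<Rightarrow> bool" where
  "simple_graph N E \<longleftrightarrow> (\<forall>i j. E i j \<longrightarrow> i < N \<and> j < N) \<and> (\<forall>i j. E i j \<longrightarrow> E j i) \<and> (\<forall>i. \<not> E i i)"

definition walk :: "nat \<Rightarrow> (nat \<Rightarrow> nat \<Rightarrow> bool) \<Rightarrow> nat \<Rightarrow> nat \<Rightarrow> nat \<Rightarrow> bool" where
  "walk N E i j k \<longleftrightarrow> (\<exists>f::nat \<Rightarrow> nat. f 0 = i \<and> f k = j \<and> (\<forall>t\<le>k. f t < N) \<and> (\<forall>t<k. E (f t) (f (Suc t))))"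

definition connected_graph :: "nat \<Rightarrow> (nat \<Rightarrow> nat \<Rightarrow> bool) \<Rightarrow> bool" where
  "connected_graph N E \<longleftrightarrow> (\<forall>i<N. \<forall>j<N. \<exists>k. walk N E i j k)"

definition gdist :: "nat \<Rightarrow> (nat \<Rightarrow> nat \<Rightarrow> bool) \<Rightarrow> nat \<Rightarrow> nat \<Rightarrow> nat" where
  "gdist N E i j = (LEAST k. walk N E i j k)"

definition diameter :: "nat \<Rightarrow> (nat \<Rightarrow> nat \<Rightarrow> bool) \<Rightarrow> nat" where
  "diameter N E = Max {gdist N E i j | i j. i < N \<and> j < N}"

definition laplacian :: "nat \<Rightarrow> (nat \<Rightarrow> nat \<Rightarrow> bool) \<Rightarrow> real mat" where
  "laplacian N E = mat N N (\<lambda>(i,j). if i = j then real (card {k. k < N \<and> E i k})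
                                     else if E i j then -1 else 0)"

definition path_laplacian :: "nat \<Rightarrow> (nat \<Rightarrow> nat \<Rightarrow> bool) \<Rightarrow> nat \<Rightarrow> real mat" where
  "path_laplacian N E d = mat N N (\<lambda>(i,j). if i = j then real (card {k. k < N \<and> k \<noteq> i \<and> gdist N E i k = d})
                                     else if gdist N E i j = d then -1 else 0)"

definition mellin_laplacian :: "nat \<Rightarrow> (nat \<Rightarrow> nat \<Rightarrow> bool) \<Rightarrow> real \<Rightarrow> real mat" where
  "mellin_laplacian N E s = mat N N (\<lambda>(i,j).
      \<Sum>d = 1..diameter N E. real d powr (-s) * path_laplacian N E d $$ (i,j))"

definition laplace_laplacian :: "nat \<Rightarrow> (nat \<Rightarrow> nat \<Rightarrow> bool) \<Rightarrow> real \<Rightarrow> real mat" where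
  "laplace_laplacian N E lam = mat N N (\<lambda>(i,j). laplacian N E $$ (i,j) +
      (\<Sum>d = 2..diameter N E. exp (- lam * real d) * path_laplacian N E d $$ (i,j)))"

text \<open>Eigenvalues (roots of the characteristic polynomial, with multiplicity) in
  increasing order; eig A k is lambda_k(A) for 1 \<le> k \<le> N.\<close>
definition eig :: "real mat \<Rightarrow> nat \<Rightarrow> real" where
  "eig A k = sorted_list_of_multiset (proots (char_poly A)) ! (k - 1)"

definition eigenratio :: "real mat \<Rightarrow> real" where
  "eigenratio A = eig A 2 / eig A (dim_row A)"

end

theory Submission
  imports Defs
begin


lemma real_sym_char_poly_real:
  fixes A :: "real mat"
  assumes A: "A \<in> carrier_mat n n" and sym: "\<And>i j. i<n \<Longrightarrow> j<n \<Longrightarrow> A$$(i,j) = A$$(j,i)"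
  shows "\<exists>bs. char_poly A = (\<Prod>b\<leftarrow>bs. [:-b,1:]) \<and> length bs = n"
proof -
  let ?Ac = "map_mat complex_of_real A"
  have Ac: "?Ac \<in> carrier_mat n n" using A by auto
  obtain as where cp: "char_poly ?Ac = (\<Prod>a\<leftarrow>as. [:-a,1:])" and len: "length as = n"
    using char_poly_factorized[OF Ac] by auto
  have hom: "char_poly ?Ac = map_poly complex_of_real (char_poly A)"
    by (rule of_real_hom.char_poly_hom[OF A])
  have real: "Im a = 0" if a: "a \<in> set as" for a
  proof -
    have "poly (char_poly ?Ac) a = 0" unfolding cp poly_prod_list using a
      by (auto simp: prod_list_zero_iff)
    hence "eigenvalue ?Ac a" using eigenvalue_root_char_poly[OF Ac] by simp
    then obtain v where ev: "eigenvector ?Ac v a" unfolding eigenvalue_def by auto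
    hence v: "v \<in> carrier_vec n" "v \<noteq> 0\<^sub>v n" "?Ac *\<^sub>v v = a \<cdot>\<^sub>v v" unfolding eigenvector_def using Ac by auto
    have row: "(\<Sum>j<n. complex_of_real (A$$(i,j)) * v$j) = a * v$i" if i: "i < n" for i
    proof -
      have "(?Ac *\<^sub>v v) $ i = a * v$i" using v(3) i v(1) by simp
      moreover have "(?Ac *\<^sub>v v) $ i = (\<Sum>j<n. complex_of_real (A$$(i,j)) * v$j)"
        using i A v(1) by (auto simp: scalar_prod_def row_def intro!: sum.cong)
      ultimately show ?thesis by simp
    qed
    define s where "s = (\<Sum>i<n. \<Sum>j<n. cnj (v$i) * (complex_of_real (A$$(i,j)) * v$j))"
    define w where "w = (\<Sum>i<n. cnj (v$i) * v$i)"
    have s_eq: "s = a * w"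
    proof -
      have "s = (\<Sum>i<n. cnj (v$i) * (\<Sum>j<n. complex_of_real (A$$(i,j)) * v$j))"
        unfolding s_def by (simp only: sum_distrib_left)
      also have "\<dots> = (\<Sum>i<n. cnj (v$i) * (a * v$i))"
        by (rule sum.cong, simp_all add: row)
      also have "\<dots> = a * w" unfolding w_def sum_distrib_left
        by (rule sum.cong, simp_all add: mult_ac)
      finally show ?thesis .
    qed
    have "cnj s = (\<Sum>i<n. \<Sum>j<n. v$i * (complex_of_real (A$$(i,j)) * cnj (v$j)))"
      unfolding s_def by (simp add: mult_ac)
    also have "\<dots> = (\<Sum>j<n. \<Sum>i<n. v$i * (complex_of_real (A$$(i,j)) * cnj (v$j)))"
      by (rule sum.swap)
    also have "\<dots> = s" unfolding s_def
      by (intro sum.cong refl, auto simp: sym mult_ac)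
    finally have cs: "cnj s = s" .
    have w_eq: "w = complex_of_real (\<Sum>i<n. (cmod (v$i))^2)" unfolding w_def of_real_sum
      by (intro sum.cong refl) (metis complex_norm_square mult.commute)
    obtain i where i: "i < n" "v$i \<noteq> 0" using v(1,2) by (metis carrier_vecD eq_vecI index_zero_vec(1) index_zero_vec(2))
    have "(\<Sum>i<n. (cmod (v$i))^2) > 0"
    proof -
      have "(cmod (v$i))^2 \<le> (\<Sum>i<n. (cmod (v$i))^2)"
        by (rule member_le_sum, insert i, auto)
      moreover have "(cmod (v$i))^2 > 0" using i by auto
      ultimately show ?thesis by linarith
    qed
    hence wnz1: "w \<noteq> 0" unfolding w_eq by (metis of_real_eq_0_iff less_irrefl)
    have wnz2: "Im w = 0" unfolding w_eq by (rule Im_complex_of_real)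
    note wnz = wnz1 wnz2
    have "Im s = 0" using cs by (metis Im_complex_of_real Reals_cnj_iff complex_is_Real_iff)
    have "a = s / w" using s_eq wnz by auto
    thus ?thesis using \<open>Im s = 0\<close> wnz by (simp add: Im_divide)
  qed
  define bs where "bs = map Re as"
  have asbs: "as = map complex_of_real bs" unfolding bs_def
    by (rule nth_equalityI, auto simp: complex_eq_iff real)
  have "poly (char_poly A) x = poly (\<Prod>b\<leftarrow>bs. [:-b,1:]) x" for x
  proof -
    have "complex_of_real (poly (char_poly A) x) = poly (char_poly ?Ac) (of_real x)"
      unfolding hom of_real_hom.poly_map_poly ..
    also have "\<dots> = (\<Prod>b\<leftarrow>bs. (of_real x - of_real b))"
      unfolding cp asbs poly_prod_list by (simp add: o_def)
    also have "\<dots> = complex_of_real (poly (\<Prod>b\<leftarrow>bs. [:-b,1:]) x)"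
      unfolding poly_prod_list by (induct bs) (simp_all add: o_def)
    finally show ?thesis by (metis of_real_eq_iff)
  qed
  hence "char_poly A = (\<Prod>b\<leftarrow>bs. [:-b,1:])"
    using poly_eq_poly_eq_iff by blast
  moreover have "length bs = n" using len bs_def by simp
  ultimately show ?thesis by blast
qed

lemma trace_mat_delete:
  fixes A :: "real mat"
  assumes A: "A \<in> carrier_mat (Suc n) (Suc n)" and i: "i < Suc n"
  shows "(\<Sum>k<n. mat_delete A i i $$ (k,k)) = (\<Sum>k<Suc n. A$$(k,k)) - A$$(i,i)"
proof -
  have "(\<Sum>k<n. mat_delete A i i $$ (k,k)) = (\<Sum>k<n. A$$(insert_index i k, insert_index i k))"
    by (rule sum.cong[OF refl], rule mat_delete_index[symmetric, OF A i i], auto)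
  also have "\<dots> = sum (\<lambda>k. A$$(k,k)) (insert_index i ` {..<n})"
    by (rule sum.reindex[symmetric, unfolded o_def], auto simp: inj_on_def insert_index_def split: if_splits)
  also have "insert_index i ` {..<n} = {..<Suc n} - {i}"
  proof
    show "insert_index i ` {..<n} \<subseteq> {..<Suc n} - {i}" by (auto simp: insert_index_def)
    show "{..<Suc n} - {i} \<subseteq> insert_index i ` {..<n}"
    proof
      fix x assume x: "x \<in> {..<Suc n} - {i}"
      show "x \<in> insert_index i ` {..<n}"
      proof (cases "x < i")
        case True
        hence "x = insert_index i x" "x < n" using i by (auto simp: insert_index_def)
        thus ?thesis by blast
      next
        case False
        hence "x = insert_index i (x - 1)" "x - 1 < n" using x by (auto simp: insert_index_def)
        thus ?thesis by blast
      qed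
    qed
  qed
  also have "sum (\<lambda>k. A$$(k,k)) ({..<Suc n} - {i}) = (\<Sum>k<Suc n. A$$(k,k)) - A$$(i,i)"
    using i by (simp add: sum_diff1)
  finally show ?thesis .
qed

lemma char_poly_coeff_trace:
  fixes A :: "real mat"
  shows "A \<in> carrier_mat (Suc m) (Suc m) \<Longrightarrow> coeff (char_poly A) m = - (\<Sum>i<Suc m. A$$(i,i))"
proof (induct m arbitrary: A)
  case 0
  have ut: "upper_triangular A" using 0 by (auto simp: upper_triangular_def)
  have "diag_mat A = [A$$(0,0)]" using 0 by (auto simp: diag_mat_def)
  hence "char_poly A = [:-A$$(0,0), 1:]" using char_poly_upper_triangular[OF 0 ut] by simp
  thus ?case by simp
next
  case (Suc m A)
  let ?T = "\<Sum>k<Suc (Suc m). A$$(k,k)"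
  have "coeff (pderiv (char_poly A)) m = of_nat (Suc m) * coeff (char_poly A) (Suc m)"
    by (rule coeff_pderiv)
  also have "pderiv (char_poly A) = (\<Sum>i < Suc (Suc m). char_poly (mat_delete A i i))"
    by (rule pderiv_char_poly[OF Suc(2)])
  finally have "of_nat (Suc m) * coeff (char_poly A) (Suc m)
     = (\<Sum>i < Suc (Suc m). coeff (char_poly (mat_delete A i i)) m)"
    by (simp add: coeff_sum)
  also have "\<dots> = (\<Sum>i < Suc (Suc m). - (?T - A$$(i,i)))"
  proof (rule sum.cong[OF refl])
    fix i assume i: "i \<in> {..<Suc (Suc m)}"
    have "mat_delete A i i \<in> carrier_mat (Suc m) (Suc m)" using Suc(2) by (auto simp: mat_delete_def)
    from Suc(1)[OF this] trace_mat_delete[OF Suc(2), of i] i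
    show "coeff (char_poly (mat_delete A i i)) m = - (?T - A$$(i,i))" by simp
  qed
  also have "\<dots> = - (of_nat (Suc m) * ?T)"
    by (simp add: sum_subtractf sum_negf algebra_simps)
  finally have eq: "real (Suc m) * coeff (char_poly A) (Suc m) = real (Suc m) * (- ?T)" by (simp only: mult_minus_right)
  have nz: "real (Suc m) \<noteq> 0" by simp
  from eq show ?case by (rule mult_left_cancel[OF nz, THEN iffD1])
qed

lemma coeff_prod_linear:
  fixes as :: "real list"
  shows "coeff (\<Prod>a\<leftarrow>as. [:-a,1:]) (length as) = 1 \<and>
     (as \<noteq> [] \<longrightarrow> coeff (\<Prod>a\<leftarrow>as. [:-a,1:]) (length as - 1) = - sum_list as)"
proof (induct as)
  case Nil
  then show ?case by simp
next
  case (Cons a as)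
  let ?q = "\<Prod>a\<leftarrow>as. [:-a,1:]"
  have deg: "degree ?q = length as" by (rule degree_linear_factors[of uminus as, simplified])
  have q1: "coeff ?q (Suc (length as)) = 0" using deg by (simp add: coeff_eq_0)
  have e: "(\<Prod>a\<leftarrow>a#as. [:-a,1:]) = Polynomial.smult (-a) ?q + pCons 0 ?q"
    by (simp add: mult_pCons_left)
  show ?case
  proof (cases as)
    case Nil
    then show ?thesis by simp
  next
    case (Cons b bs)
    have "coeff ?q (length as - 1) = - sum_list as" using Cons.hyps \<open>as = b # bs\<close> by auto
    moreover have "length as = Suc (length as - 1)" using \<open>as = b # bs\<close> by simp
    ultimately have "coeff (pCons 0 ?q) (length as) = - sum_list as"
      by (metis coeff_pCons_Suc)
    thus ?thesis unfolding e using Cons.hyps q1 by simp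
  qed
qed

lemma eig_bound:
  fixes A :: "real mat"
  assumes A: "A \<in> carrier_mat n n" and x: "poly (char_poly A) x = 0"
  shows "\<bar>x\<bar> \<le> (\<Sum>i<n. \<Sum>j<n. \<bar>A$$(i,j)\<bar>)"
proof -
  have "eigenvalue A x" using eigenvalue_root_char_poly[OF A] x by simp
  then obtain v where ev: "eigenvector A v x" unfolding eigenvalue_def by auto
  hence v: "v \<in> carrier_vec n" "v \<noteq> 0\<^sub>v n" "A *\<^sub>v v = x \<cdot>\<^sub>v v" unfolding eigenvector_def using A by auto
  obtain i0 where i0: "i0 < n" "v$i0 \<noteq> 0" using v(1,2) by (metis carrier_vecD eq_vecI index_zero_vec(1) index_zero_vec(2))
  define S where "S = (\<lambda>j. \<bar>v$j\<bar>) ` {..<n}"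
  have S: "finite S" "S \<noteq> {}" using i0 unfolding S_def by auto
  obtain i where i: "i < n" "\<bar>v$i\<bar> = Max S" using Max_in[OF S] unfolding S_def by auto
  have mx: "\<bar>v$j\<bar> \<le> \<bar>v$i\<bar>" if "j < n" for j using Max_ge[OF S(1)] that i unfolding S_def by auto
  have vi: "\<bar>v$i\<bar> > 0" using mx[OF i0(1)] i0(2) by auto
  have row: "x * v$i = (\<Sum>j<n. A$$(i,j) * v$j)"
  proof -
    have "(A *\<^sub>v v) $ i = x * v$i" using v(3) i v(1) by simp
    moreover have "(A *\<^sub>v v) $ i = (\<Sum>j<n. A$$(i,j) * v$j)"
      using i A v(1) by (auto simp: scalar_prod_def row_def intro!: sum.cong)
    ultimately show ?thesis by simp
  qed
  have "\<bar>x\<bar> * \<bar>v$i\<bar> = \<bar>\<Sum>j<n. A$$(i,j) * v$j\<bar>" by (simp only: row abs_mult[symmetric])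
  also have "\<dots> \<le> (\<Sum>j<n. \<bar>A$$(i,j) * v$j\<bar>)" by (rule sum_abs)
  also have "\<dots> = (\<Sum>j<n. \<bar>A$$(i,j)\<bar> * \<bar>v$j\<bar>)" by (simp add: abs_mult)
  also have "\<dots> \<le> (\<Sum>j<n. \<bar>A$$(i,j)\<bar> * \<bar>v$i\<bar>)"
    by (rule sum_mono, rule mult_left_mono, auto intro: mx)
  also have "\<dots> = (\<Sum>j<n. \<bar>A$$(i,j)\<bar>) * \<bar>v$i\<bar>" by (simp add: sum_distrib_right)
  finally have "\<bar>x\<bar> \<le> (\<Sum>j<n. \<bar>A$$(i,j)\<bar>)" using vi by simp
  also have "\<dots> \<le> (\<Sum>i<n. \<Sum>j<n. \<bar>A$$(i,j)\<bar>)"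
    using i by (intro member_le_sum) (auto intro: sum_nonneg)
  finally show ?thesis .
qed

lemma common_subseq:
  fixes X :: "nat \<Rightarrow> nat \<Rightarrow> real"
  shows "(\<forall>i<n. Bseq (X i)) \<Longrightarrow> \<exists>r l. strict_mono r \<and> (\<forall>i<n. (\<lambda>k. X i (r k)) \<longlonglongrightarrow> l i)"
proof (induct n)
  case 0
  show ?case by (rule exI[of _ id], auto simp: strict_mono_def)
next
  case (Suc n)
  then obtain r l where r: "strict_mono r" and l: "\<forall>i<n. (\<lambda>k. X i (r k)) \<longlonglongrightarrow> l i" by auto
  have "Bseq (X n)" using Suc(2) by auto
  then obtain K where K: "\<And>k. norm (X n k) \<le> K" by (auto simp: Bseq_def)
  have B: "Bseq (\<lambda>k. X n (r k))" using K by (intro BseqI'[of _ K]) auto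
  obtain f where f: "strict_mono f" "monoseq (\<lambda>k. X n (r (f k)))" using seq_monosub[of "\<lambda>k. X n (r k)"] by blast
  have "Bseq (\<lambda>k. X n (r (f k)))" using K by (intro BseqI'[of _ K]) auto
  hence "convergent (\<lambda>k. X n (r (f k)))" using f(2) by (rule Bseq_monoseq_convergent)
  then obtain L where L: "(\<lambda>k. X n (r (f k))) \<longlonglongrightarrow> L" by (auto simp: convergent_def)
  show ?case
  proof (intro exI conjI allI impI)
    show "strict_mono (r \<circ> f)" using r f(1) by (rule strict_mono_o)
    fix i assume i: "i < Suc n"
    show "(\<lambda>k. X i ((r \<circ> f) k)) \<longlonglongrightarrow> (l(n := L)) i"
    proof (cases "i = n")
      case True thus ?thesis using L by simp
    next
      case False
      hence "i < n" using i by simp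
      hence "(\<lambda>k. X i (r k)) \<longlonglongrightarrow> l i" using l by auto
      from LIMSEQ_subseq_LIMSEQ[OF this f(1)] False show ?thesis by (simp add: o_def)
    qed
  qed
qed

lemma proots_prod_linear: "proots (\<Prod>a\<leftarrow>as. [:-a,1:]) = mset (as :: real list)"
proof (induct as)
  case Nil then show ?case by simp
next
  case (Cons a as)
  have nz: "(\<Prod>a\<leftarrow>as. [:-a,1:]) \<noteq> 0" by (auto simp: prod_list_zero_iff)
  have "proots ([:-a,1:] * (\<Prod>a\<leftarrow>as. [:-a,1:])) = proots [:-a,1:] + proots (\<Prod>a\<leftarrow>as. [:-a,1:])"
    by (rule proots_mult, auto simp: nz)
  then show ?case using Cons by (simp add: proots_linear_factor)
qed

lemma prod_list_sort: "(\<Prod>a\<leftarrow>sort xs. f a) = (\<Prod>a\<leftarrow>xs. (f a :: real))"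
  by (metis mset_map mset_sort prod_mset_prod_list)

lemma roots_seq:
  fixes xs :: "nat \<Rightarrow> real list" and ys :: "real list"
  assumes len: "\<And>k. length (xs k) = n" "length ys = n"
    and srt: "\<And>k. sorted (xs k)" "sorted ys"
    and bnd: "\<And>k a. a \<in> set (xs k) \<Longrightarrow> \<bar>a\<bar> \<le> B"
    and conv: "\<And>x. (\<lambda>k. \<Prod>a\<leftarrow>xs k. (x - a)) \<longlonglongrightarrow> (\<Prod>a\<leftarrow>ys. (x - a))"
    and i: "i < n"
  shows "(\<lambda>k. xs k ! i) \<longlonglongrightarrow> ys ! i"
proof (rule ccontr)
  assume nc: "\<not> ?thesis"
  then obtain e where e: "e > 0" and freq: "\<forall>N. \<exists>k\<ge>N. e \<le> dist (xs k ! i) (ys ! i)"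
    unfolding lim_sequentially by (auto simp: not_less)
  define S where "S = {k. e \<le> dist (xs k ! i) (ys ! i)}"
  have infS: "infinite S" unfolding S_def infinite_nat_iff_unbounded_le using freq by auto
  define r where "r = enumerate S"
  have r: "strict_mono r" unfolding r_def using infS by (rule strict_mono_enumerate)
  have rS: "e \<le> dist (xs (r k) ! i) (ys ! i)" for k
    using enumerate_in_set[OF infS, of k] unfolding r_def S_def by auto
  have "\<exists>s l. strict_mono s \<and> (\<forall>j<n. ((\<lambda>k. xs (r k) ! j) o s) \<longlonglongrightarrow> l j)"
  proof -
    have "\<forall>j<n. Bseq (\<lambda>k. xs (r k) ! j)"
    proof (intro allI impI)
      fix j assume j: "j < n"
      show "Bseq (\<lambda>k. xs (r k) ! j)"
        by (rule BseqI'[of _ B], simp, rule bnd, rule nth_mem, simp add: len j)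
    qed
    from common_subseq[OF this] show ?thesis by (auto simp: o_def)
  qed
  then obtain s l where s: "strict_mono s" and l: "\<And>j. j < n \<Longrightarrow> (\<lambda>k. xs (r (s k)) ! j) \<longlonglongrightarrow> l j"
    by (auto simp: o_def)
  define zs where "zs = map l [0..<n]"
  have zsn: "zs ! j = l j" if "j < n" for j using that by (simp add: zs_def)
  have lenz: "length zs = n" by (simp add: zs_def)
  have sortz: "sorted zs"
  proof (unfold sorted_iff_nth_mono, intro allI impI)
    fix j j' assume jj: "j \<le> j'" "j' < length zs"
    have "l j \<le> l j'"
      by (rule LIMSEQ_le[OF l l], insert jj lenz, auto intro!: sorted_nth_mono[OF srt(1)] simp: len)
    thus "zs ! j \<le> zs ! j'" using jj lenz by (simp add: zsn)
  qed
  have prod_nth: "(\<Prod>a\<leftarrow>ws. (x - a)) = (\<Prod>j<length ws. (x - ws ! j))" for ws :: "real list" and x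
    by (induct ws) (simp_all del: prod.lessThan_Suc add: prod.lessThan_Suc_shift)
  have eqp: "(\<Prod>a\<leftarrow>zs. (x - a)) = (\<Prod>a\<leftarrow>ys. (x - a))" for x
  proof -
    have "(\<lambda>k. \<Prod>a\<leftarrow>xs (r (s k)). (x - a)) \<longlonglongrightarrow> (\<Prod>a\<leftarrow>zs. (x - a))"
      unfolding prod_nth len lenz
      by (intro tendsto_prod tendsto_diff tendsto_const, auto simp: zsn intro: l)
    moreover have "(\<lambda>k. \<Prod>a\<leftarrow>xs (r (s k)). (x - a)) \<longlonglongrightarrow> (\<Prod>a\<leftarrow>ys. (x - a))"
      using LIMSEQ_subseq_LIMSEQ[OF conv strict_mono_o[OF r s]] by (simp add: o_def)
    ultimately show ?thesis by (rule LIMSEQ_unique)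
  qed
  have "poly (\<Prod>a\<leftarrow>zs. [:-a,1:]) = poly (\<Prod>a\<leftarrow>ys. [:-a,1:])"
    by (rule ext, simp add: poly_prod_list o_def eqp)
  hence "(\<Prod>a\<leftarrow>zs. [:-a,1:]) = (\<Prod>a\<leftarrow>ys. [:-a,1:])" by (simp add: poly_eq_poly_eq_iff)
  hence "proots (\<Prod>a\<leftarrow>zs. [:-a,1:]) = proots (\<Prod>a\<leftarrow>ys. [:-a,1:])" by (rule arg_cong)
  hence ms: "mset zs = mset ys" by (simp only: proots_prod_linear)
  have "sort ys = zs" by (rule properties_for_sort[OF _ sortz], simp add: ms)
  hence "zs = ys" using sorted_sort_id[OF srt(2)] by simp
  hence li: "l i = ys ! i" using zsn[OF i] by simp
  have "(\<lambda>k. dist (xs (r (s k)) ! i) (ys ! i)) \<longlonglongrightarrow> dist (l i) (ys ! i)"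
    by (intro tendsto_dist l[OF i] tendsto_const)
  hence "e \<le> dist (l i) (ys ! i)"
    by (rule LIMSEQ_le_const, auto intro: rS)
  thus False using li e by simp
qed

lemma poly_prod_lin: "poly (\<Prod>a\<leftarrow>as. [:-a,1:]) x = (\<Prod>a\<leftarrow>as. (x - a :: real))"
  by (induct as) (simp_all add: algebra_simps)

lemma poly_char_poly_eq:
  fixes A :: "real mat"
  assumes A: "A \<in> carrier_mat n n"
  shows "poly (char_poly A) x = (\<Sum>p | p permutes {0..<n}. of_int (sign p) *
     (\<Prod>i=0..<n. (if i = p i then x else 0) - A$$(i, p i)))"
proof -
  have C: "- char_matrix A x \<in> carrier_mat n n" using A by simp
  have "poly (char_poly A) x = det (- char_matrix A x)" by (rule char_poly_matrix[OF A])
  also have "\<dots> = (\<Sum>p | p permutes {0..<n}. of_int (sign p) *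
     (\<Prod>i=0..<n. (if i = p i then x else 0) - A$$(i, p i)))"
    unfolding det_def'[OF C]
  proof (intro sum.cong refl arg_cong2[where f="(*)"] prod.cong)
    fix p i assume p: "p \<in> {p. p permutes {0..<n}}" and i: "i \<in> {0..<n}"
    have pi: "p i < n" using p i permutes_in_image by fastforce
    show "(- char_matrix A x) $$ (i, p i) = (if i = p i then x else 0) - A $$ (i, p i)"
      using A i pi by (auto simp: char_matrix_def)
  qed
  finally show ?thesis .
qed

lemma eig_seq:
  fixes A :: "nat \<Rightarrow> real mat" and A0 :: "real mat"
  assumes A: "\<And>k. A k \<in> carrier_mat n n" and A0: "A0 \<in> carrier_mat n n"
    and sym: "\<And>k i j. i<n \<Longrightarrow> j<n \<Longrightarrow> A k $$ (i,j) = A k $$ (j,i)"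
    and sym0: "\<And>i j. i<n \<Longrightarrow> j<n \<Longrightarrow> A0 $$ (i,j) = A0 $$ (j,i)"
    and conv: "\<And>i j. i<n \<Longrightarrow> j<n \<Longrightarrow> (\<lambda>k. A k $$ (i,j)) \<longlonglongrightarrow> A0 $$ (i,j)"
    and m: "m < n"
  shows "(\<lambda>k. eig (A k) (Suc m)) \<longlonglongrightarrow> eig A0 (Suc m)"
proof -
  have "\<forall>k. \<exists>bs. char_poly (A k) = (\<Prod>b\<leftarrow>bs. [:-b,1:]) \<and> length bs = n"
    using real_sym_char_poly_real[OF A sym] by blast
  then obtain bs where bs: "\<And>k. char_poly (A k) = (\<Prod>b\<leftarrow>bs k. [:-b,1:])" "\<And>k. length (bs k) = n"
    by metis
  obtain cs where cs: "char_poly A0 = (\<Prod>b\<leftarrow>cs. [:-b,1:])" "length cs = n"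
    using real_sym_char_poly_real[OF A0 sym0] by blast
  have eigk: "eig (A k) (Suc m) = sort (bs k) ! m" for k
    unfolding eig_def bs(1) proots_prod_linear sorted_list_of_multiset_mset by simp
  have eig0: "eig A0 (Suc m) = sort cs ! m"
    unfolding eig_def cs(1) proots_prod_linear sorted_list_of_multiset_mset by simp
  have polyk: "(\<Prod>a\<leftarrow>sort (bs k). (x - a)) = poly (char_poly (A k)) x" for k x
    unfolding bs(1) poly_prod_lin prod_list_sort ..
  have poly0: "(\<Prod>a\<leftarrow>sort cs. (x - a)) = poly (char_poly A0) x" for x
    unfolding cs(1) poly_prod_lin prod_list_sort ..
  define T where "T = (\<lambda>k. \<Sum>i<n. \<Sum>j<n. \<bar>A k $$ (i,j)\<bar>)"
  have "T \<longlonglongrightarrow> (\<Sum>i<n. \<Sum>j<n. \<bar>A0 $$ (i,j)\<bar>)" unfolding T_def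
    by (intro tendsto_sum tendsto_rabs conv, auto)
  hence "Bseq T" by (rule convergent_imp_Bseq[OF convergentI])
  then obtain K where K: "\<And>k. norm (T k) \<le> K" by (auto simp: Bseq_def)
  show ?thesis unfolding eigk eig0
  proof (rule roots_seq[where B=K])
    show "length (sort (bs k)) = n" for k using bs(2) by simp
    show "length (sort cs) = n" using cs(2) by simp
    show "sorted (sort (bs k))" for k by simp
    show "sorted (sort cs)" by simp
    show "m < n" by fact
    fix k a assume a: "a \<in> set (sort (bs k))"
    have "poly (char_poly (A k)) a = 0" unfolding bs(1) poly_prod_lin using a
      by (auto simp: prod_list_zero_iff)
    from eig_bound[OF A this] have "\<bar>a\<bar> \<le> T k" unfolding T_def .
    thus "\<bar>a\<bar> \<le> K" using K[of k] by simp
  next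
    fix x
    show "(\<lambda>k. \<Prod>a\<leftarrow>sort (bs k). (x - a)) \<longlonglongrightarrow> (\<Prod>a\<leftarrow>sort cs. (x - a))"
      unfolding polyk poly0 poly_char_poly_eq[OF A] poly_char_poly_eq[OF A0]
    proof (intro tendsto_sum tendsto_mult tendsto_const tendsto_prod tendsto_diff)
      fix p i assume p: "p \<in> {p. p permutes {0..<n}}" and i: "i \<in> {0..<n}"
      have pi: "p i < n" using p i permutes_in_image by fastforce
      show "(\<lambda>k. A k $$ (i, p i)) \<longlonglongrightarrow> A0 $$ (i, p i)" using conv[OF _ pi] i by simp
    qed
  qed
qed

lemma eig_at_top:
  fixes A :: "real \<Rightarrow> real mat" and A0 :: "real mat"
  assumes A: "\<And>t. A t \<in> carrier_mat n n" and A0: "A0 \<in> carrier_mat n n"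
    and sym: "\<And>t i j. i<n \<Longrightarrow> j<n \<Longrightarrow> A t $$ (i,j) = A t $$ (j,i)"
    and sym0: "\<And>i j. i<n \<Longrightarrow> j<n \<Longrightarrow> A0 $$ (i,j) = A0 $$ (j,i)"
    and conv: "\<And>i j. i<n \<Longrightarrow> j<n \<Longrightarrow> ((\<lambda>t. A t $$ (i,j)) \<longlongrightarrow> A0 $$ (i,j)) at_top"
    and m: "m < n"
  shows "((\<lambda>t. eig (A t) (Suc m)) \<longlongrightarrow> eig A0 (Suc m)) at_top"
proof (rule tendsto_at_topI_sequentially)
  fix X :: "nat \<Rightarrow> real" assume X: "filterlim X at_top sequentially"
  show "(\<lambda>k. eig (A (X k)) (Suc m)) \<longlonglongrightarrow> eig A0 (Suc m)"
    by (rule eig_seq[where A="\<lambda>k. A (X k)"], auto intro: A sym A0 sym0 m filterlim_compose[OF conv X])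
qed

lemma eig_at_right0:
  fixes A :: "real \<Rightarrow> real mat" and A0 :: "real mat"
  assumes A: "\<And>t. A t \<in> carrier_mat n n" and A0: "A0 \<in> carrier_mat n n"
    and sym: "\<And>t i j. i<n \<Longrightarrow> j<n \<Longrightarrow> A t $$ (i,j) = A t $$ (j,i)"
    and sym0: "\<And>i j. i<n \<Longrightarrow> j<n \<Longrightarrow> A0 $$ (i,j) = A0 $$ (j,i)"
    and conv: "\<And>i j. i<n \<Longrightarrow> j<n \<Longrightarrow> ((\<lambda>t. A t $$ (i,j)) \<longlongrightarrow> A0 $$ (i,j)) (at_right 0)"
    and m: "m < n"
  shows "((\<lambda>t. eig (A t) (Suc m)) \<longlongrightarrow> eig A0 (Suc m)) (at_right 0)"
proof -
  have "\<forall>X. (\<forall>k. X k \<in> {0::real<..} - {0}) \<longrightarrow> X \<longlonglongrightarrow> 0 \<longrightarrow>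
     ((\<lambda>t. eig (A t) (Suc m)) \<circ> X) \<longlonglongrightarrow> eig A0 (Suc m)"
  proof (intro allI impI)
    fix X :: "nat \<Rightarrow> real" assume X: "\<forall>k. X k \<in> {0<..} - {0}" "X \<longlonglongrightarrow> 0"
    have c: "(\<lambda>k. A (X k) $$ (i,j)) \<longlonglongrightarrow> A0 $$ (i,j)" if "i<n" "j<n" for i j
      using conv[OF that, unfolded tendsto_at_iff_sequentially] X by (auto simp: o_def)
    show "((\<lambda>t. eig (A t) (Suc m)) \<circ> X) \<longlonglongrightarrow> eig A0 (Suc m)"
      unfolding o_def by (rule eig_seq[where A="\<lambda>k. A (X k)"], auto intro: A sym A0 sym0 m c)
  qed
  thus ?thesis by (simp only: tendsto_at_iff_sequentially)
qed

lemma eig_suc: "char_poly A = (\<Prod>b\<leftarrow>bs. [:-b,1:]) \<Longrightarrow> eig A (Suc m) = sort bs ! m"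
  unfolding eig_def by (simp add: proots_prod_linear sorted_list_of_multiset_mset)

lemma sum_roots:
  fixes A :: "real mat"
  assumes A: "A \<in> carrier_mat (Suc m) (Suc m)" and cp: "char_poly A = (\<Prod>b\<leftarrow>bs. [:-b,1:])"
    and len: "length bs = Suc m"
  shows "sum_list bs = (\<Sum>i<Suc m. A$$(i,i))"
proof -
  have "coeff (char_poly A) m = - (\<Sum>i<Suc m. A$$(i,i))" by (rule char_poly_coeff_trace[OF A])
  moreover have "coeff (char_poly A) m = - sum_list bs" using coeff_prod_linear[of bs] len cp by auto
  ultimately show ?thesis by simp
qed

lemma sum_list_sort: "sum_list (sort xs) = sum_list (xs :: real list)"
  by (metis mset_sort sum_mset_sum_list)




context
  fixes N :: nat and E :: "nat \<Rightarrow> nat \<Rightarrow> bool"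
  assumes sg: "simple_graph N E" and cg: "connected_graph N E" and N2: "N \<ge> 2"
begin

lemma Esym: "E i j \<Longrightarrow> E j i" using sg by (auto simp: simple_graph_def)
lemma Eirr: "\<not> E i i" using sg by (auto simp: simple_graph_def)
lemma Ein: "E i j \<Longrightarrow> i < N \<and> j < N" using sg by (auto simp: simple_graph_def)

lemma walk_rev: assumes "walk N E i j k" shows "walk N E j i k"
proof -
  from assms obtain f where f: "f 0 = i" "f k = j" "\<forall>t\<le>k. f t < N" "\<forall>t<k. E (f t) (f (Suc t))"
    unfolding walk_def by auto
  define g where "g = (\<lambda>t. f (k - t))"
  have "g 0 = j" "g k = i" "\<forall>t\<le>k. g t < N" using f unfolding g_def by auto
  moreover have "\<forall>t<k. E (g t) (g (Suc t))"
  proof (intro allI impI)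
    fix t assume t: "t < k"
    have "k - t = Suc (k - Suc t)" using t by simp
    moreover have "E (f (k - Suc t)) (f (Suc (k - Suc t)))" using f(4) t by auto
    hence "E (f (Suc (k - Suc t))) (f (k - Suc t))" by (rule Esym)
    ultimately show "E (g t) (g (Suc t))" unfolding g_def by simp
  qed
  ultimately show ?thesis unfolding walk_def by blast
qed

lemma gdist_sym: "gdist N E i j = gdist N E j i"
proof -
  have "walk N E i j k = walk N E j i k" for k using walk_rev[of i j k] walk_rev[of j i k] by blast
  hence "(\<lambda>k. walk N E i j k) = (\<lambda>k. walk N E j i k)" by (rule ext)
  thus ?thesis unfolding gdist_def by simp
qed

lemma walk0: "walk N E i j 0 \<longleftrightarrow> i = j \<and> i < N"
  unfolding walk_def by auto

lemma walk1: "walk N E i j (Suc 0) \<longleftrightarrow> E i j"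
proof
  assume "walk N E i j (Suc 0)"
  then obtain f where "f 0 = i" "f (Suc 0) = j" "\<forall>t<Suc 0. E (f t) (f (Suc t))" unfolding walk_def by auto
  thus "E i j" by auto
next
  assume e: "E i j"
  show "walk N E i j (Suc 0)" unfolding walk_def
    by (rule exI[of _ "\<lambda>t. if t = 0 then i else j"], insert e Ein[OF e], auto simp: le_Suc_eq)
qed

lemma gdist_walk: "i < N \<Longrightarrow> j < N \<Longrightarrow> walk N E i j (gdist N E i j)"
proof -
  assume ij: "i < N" "j < N"
  from cg ij obtain k where "walk N E i j k" unfolding connected_graph_def by blast
  thus ?thesis unfolding gdist_def by (rule LeastI)
qed

lemma gdist_pos: "i < N \<Longrightarrow> j < N \<Longrightarrow> i \<noteq> j \<Longrightarrow> gdist N E i j \<ge> 1"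
  using gdist_walk[of i j] walk0[of i j] by (cases "gdist N E i j") auto

lemma gdist_le: "i < N \<Longrightarrow> j < N \<Longrightarrow> gdist N E i j \<le> diameter N E"
proof -
  assume ij: "i < N" "j < N"
  have fin: "finite {gdist N E i j | i j. i < N \<and> j < N}"
  proof -
    have "{gdist N E i j | i j. i < N \<and> j < N} \<subseteq> (\<lambda>(i,j). gdist N E i j) ` ({..<N} \<times> {..<N})" by auto
    thus ?thesis by (rule finite_subset, auto)
  qed
  show ?thesis unfolding diameter_def by (rule Max_ge[OF fin], insert ij, auto)
qed

lemma gdist_1: "i < N \<Longrightarrow> j < N \<Longrightarrow> gdist N E i j = 1 \<longleftrightarrow> E i j"
proof
  assume ij: "i < N" "j < N" and g: "gdist N E i j = 1"
  from gdist_walk[OF ij] g show "E i j" using walk1 by simp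
next
  assume ij: "i < N" "j < N" and e: "E i j"
  have ne: "i \<noteq> j" using e Eirr by auto
  show "gdist N E i j = 1" unfolding gdist_def
  proof (rule Least_equality)
    show "walk N E i j 1" using walk1 e by simp
    fix y assume "walk N E i j y"
    thus "1 \<le> y" using walk0 ne by (cases y) auto
  qed
qed

lemma diam_pos: "diameter N E \<ge> 1"
  using gdist_pos[of 0 1] gdist_le[of 0 1] N2 by auto

abbreviation "D \<equiv> diameter N E"
abbreviation "PL \<equiv> path_laplacian N E"

definition W :: "(nat \<Rightarrow> real) \<Rightarrow> real mat" where
  "W w = mat N N (\<lambda>(i,j). \<Sum>d = 1..D. w d * PL d $$ (i,j))"

lemma W_carrier: "W w \<in> carrier_mat N N" unfolding W_def by simp

lemma W_index: "i < N \<Longrightarrow> j < N \<Longrightarrow> W w $$ (i,j) = (\<Sum>d = 1..D. w d * PL d $$ (i,j))"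
  unfolding W_def by simp

lemma PL_sym: "i < N \<Longrightarrow> j < N \<Longrightarrow> PL d $$ (i,j) = PL d $$ (j,i)"
  unfolding path_laplacian_def by (auto simp: gdist_sym)

lemma W_sym: "i < N \<Longrightarrow> j < N \<Longrightarrow> W w $$ (i,j) = W w $$ (j,i)"
  by (simp add: W_index PL_sym)

lemma W_tendsto:
  assumes "\<And>d. d \<in> {1..D} \<Longrightarrow> ((\<lambda>t. w t d) \<longlongrightarrow> c d) F"
  shows "i < N \<Longrightarrow> j < N \<Longrightarrow> ((\<lambda>t. W (w t) $$ (i,j)) \<longlongrightarrow> W c $$ (i,j)) F"
proof -
  assume ij: "i < N" "j < N"
  have "((\<lambda>t. \<Sum>d = 1..D. w t d * PL d $$ (i,j)) \<longlongrightarrow> (\<Sum>d = 1..D. c d * PL d $$ (i,j))) F"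
    by (rule tendsto_sum, rule tendsto_mult, rule assms, simp, rule tendsto_const)
  thus ?thesis using ij by (simp add: W_index)
qed

lemma mellin_W: "mellin_laplacian N E s = W (\<lambda>d. real d powr (-s))"
  unfolding mellin_laplacian_def W_def ..

lemma laplacian_PL1: "i < N \<Longrightarrow> j < N \<Longrightarrow> laplacian N E $$ (i,j) = PL 1 $$ (i,j)"
proof -
  assume ij: "i < N" "j < N"
  have set: "{k. k < N \<and> E i k} = {k. k < N \<and> k \<noteq> i \<and> gdist N E i k = 1}"
  proof (rule Collect_cong)
    fix k show "k < N \<and> E i k \<longleftrightarrow> k < N \<and> k \<noteq> i \<and> gdist N E i k = 1"
      using gdist_1[OF ij(1), of k] Eirr[of i] by blast
  qed
  have L: "laplacian N E $$ (i,j) = (if i = j then real (card {k. k < N \<and> E i k}) else if E i j then -1 else 0)"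
    unfolding laplacian_def using ij by simp
  have P: "PL 1 $$ (i,j) = (if i = j then real (card {k. k < N \<and> k \<noteq> i \<and> gdist N E i k = 1})
     else if gdist N E i j = 1 then -1 else 0)"
    unfolding path_laplacian_def using ij by simp
  show ?thesis unfolding L P set using gdist_1[OF ij] by simp
qed

lemma laplace_W: "laplace_laplacian N E lam = W (\<lambda>d. if d = 1 then 1 else exp (- lam * real d))"
proof (rule eq_matI)
  show "dim_row (laplace_laplacian N E lam) = dim_row (W (\<lambda>d. if d = 1 then 1 else exp (- lam * real d)))"
    "dim_col (laplace_laplacian N E lam) = dim_col (W (\<lambda>d. if d = 1 then 1 else exp (- lam * real d)))"
    unfolding laplace_laplacian_def W_def by auto
  fix i j assume i: "i < dim_row (W (\<lambda>d. if d = 1 then 1 else exp (- lam * real d)))"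
    and j: "j < dim_col (W (\<lambda>d. if d = 1 then 1 else exp (- lam * real d)))"
  hence ij: "i < N" "j < N" unfolding W_def by auto
  have "(\<Sum>d = 1..D. (if d = 1 then 1 else exp (- lam * real d)) * PL d $$ (i,j))
     = PL 1 $$ (i,j) + (\<Sum>d = 2..D. (if d = 1 then 1 else exp (- lam * real d)) * PL d $$ (i,j))"
    using diam_pos by (subst sum.atLeast_Suc_atMost) (auto simp: numeral_2_eq_2)
  also have "(\<Sum>d = 2..D. (if d = 1 then 1 else exp (- lam * real d)) * PL d $$ (i,j))
     = (\<Sum>d = 2..D. exp (- lam * real d) * PL d $$ (i,j))"
    by (rule sum.cong) auto
  finally show "laplace_laplacian N E lam $$ (i, j) = W (\<lambda>d. if d = 1 then 1 else exp (- lam * real d)) $$ (i, j)"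
    using ij unfolding W_index[OF ij] laplace_laplacian_def by (simp add: laplacian_PL1)
qed

lemma W_L: "W (\<lambda>d. if d = 1 then 1 else 0) = laplacian N E"
proof (rule eq_matI)
  show "dim_row (W (\<lambda>d. if d = 1 then 1 else 0)) = dim_row (laplacian N E)"
    "dim_col (W (\<lambda>d. if d = 1 then 1 else 0)) = dim_col (laplacian N E)"
    unfolding laplacian_def W_def by auto
  fix i j assume "i < dim_row (laplacian N E)" "j < dim_col (laplacian N E)"
  hence ij: "i < N" "j < N" unfolding laplacian_def by auto
  have "(\<Sum>d = 1..D. (if d = 1 then 1 else 0) * PL d $$ (i,j)) = (\<Sum>d = 1..D. if d = 1 then PL d $$ (i,j) else 0)"
    by (rule sum.cong) auto
  also have "\<dots> = PL 1 $$ (i,j)" using diam_pos by (simp add: sum.delta)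
  finally show "W (\<lambda>d. if d = 1 then 1 else 0) $$ (i, j) = laplacian N E $$ (i, j)"
    unfolding W_index[OF ij] laplacian_PL1[OF ij] .
qed

definition K :: "real mat" where
  "K = mat N N (\<lambda>(i,j). (if i = j then real N else 0) - 1)"

lemma W_K: "W (\<lambda>d. 1) = K"
proof (rule eq_matI)
  show "dim_row (W (\<lambda>d. 1)) = dim_row K" "dim_col (W (\<lambda>d. 1)) = dim_col K"
    unfolding K_def W_def by auto
  fix i j assume "i < dim_row K" "j < dim_col K"
  hence ij: "i < N" "j < N" unfolding K_def by auto
  show "W (\<lambda>d. 1) $$ (i, j) = K $$ (i, j)"
  proof (cases "i = j")
    case False
    have g: "gdist N E i j \<in> {1..D}" using gdist_pos[OF ij False] gdist_le[OF ij] by auto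
    have "(\<Sum>d = 1..D. 1 * PL d $$ (i,j)) = (\<Sum>d = 1..D. if d = gdist N E i j then -1 else 0)"
      using False ij unfolding path_laplacian_def by (intro sum.cong) auto
    also have "\<dots> = -1" using g by (simp add: sum.delta)
    finally show ?thesis unfolding W_index[OF ij] using False ij by (simp add: K_def)
  next
    case True
    let ?S = "{..<N} - {i}"
    have "(\<Sum>d = 1..D. 1 * PL d $$ (i,i)) = (\<Sum>d = 1..D. \<Sum>k\<in>?S. if gdist N E i k = d then 1 else 0)"
    proof (rule sum.cong[OF refl])
      fix d assume d: "d \<in> {1..D}"
      have st: "{k. k < N \<and> k \<noteq> i \<and> gdist N E i k = d} = {k \<in> ?S. gdist N E i k = d}" by auto
      have c: "card {k \<in> ?S. gdist N E i k = d} = (\<Sum>k\<in>?S. if gdist N E i k = d then 1 else 0 :: nat)"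
        by (subst sum.inter_filter[symmetric]) simp_all
      have "real (card {k. k < N \<and> k \<noteq> i \<and> gdist N E i k = d}) = (\<Sum>k\<in>?S. if gdist N E i k = d then 1 else 0)"
        unfolding st c of_nat_sum by (rule sum.cong) simp_all
      thus "1 * PL d $$ (i,i) = (\<Sum>k\<in>?S. if gdist N E i k = d then 1 else 0)"
        using ij unfolding path_laplacian_def by simp
    qed
    also have "\<dots> = (\<Sum>k\<in>?S. \<Sum>d = 1..D. if gdist N E i k = d then 1 else 0)" by (rule sum.swap)
    also have "\<dots> = (\<Sum>k\<in>?S. 1)"
    proof (rule sum.cong[OF refl])
      fix k assume k: "k \<in> ?S"
      have g: "gdist N E i k \<in> {1..D}" using gdist_pos[of i k] gdist_le[of i k] k ij by auto
      show "(\<Sum>d = 1..D. if gdist N E i k = d then 1 else 0) = (1::real)"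
        using g by (simp add: sum.delta')
    qed
    also have "\<dots> = real N - 1"
    proof -
      have "1 \<le> N" using ij by simp
      thus ?thesis using ij by (simp add: of_nat_diff)
    qed
    finally show ?thesis unfolding W_index[OF ij] using True ij by (simp add: K_def)
  qed
qed


lemma L_carrier: "laplacian N E \<in> carrier_mat N N" unfolding laplacian_def by simp
lemma L_sym: "i < N \<Longrightarrow> j < N \<Longrightarrow> laplacian N E $$ (i,j) = laplacian N E $$ (j,i)"
  unfolding W_L[symmetric] by (rule W_sym)
lemma K_carrier: "K \<in> carrier_mat N N" unfolding K_def by simp
lemma K_sym: "i < N \<Longrightarrow> j < N \<Longrightarrow> K $$ (i,j) = K $$ (j,i)"
  unfolding W_K[symmetric] by (rule W_sym)

lemma exists_edge: "\<exists>j. E 0 j"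
proof -
  from cg N2 obtain k where w: "walk N E 0 1 k" unfolding connected_graph_def by force
  show ?thesis
  proof (cases k)
    case 0 with w walk0 show ?thesis by simp
  next
    case (Suc k')
    from w obtain f where f: "f 0 = 0" "\<forall>t<k. E (f t) (f (Suc t))" unfolding walk_def by auto
    hence "E (f 0) (f (Suc 0))" using Suc by auto
    thus ?thesis using f(1) by auto
  qed
qed

lemma eig_L_pos: "eig (laplacian N E) N > 0"
proof -
  let ?L = "laplacian N E"
  obtain bs where bs: "char_poly ?L = (\<Prod>b\<leftarrow>bs. [:-b,1:])" "length bs = N"
    using real_sym_char_poly_real[OF L_carrier L_sym] by blast
  obtain M where M: "N = Suc M" using N2 by (cases N) auto
  have e: "eig ?L N = sort bs ! M" using eig_suc[OF bs(1), of M] M by simp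
  have tr: "sum_list bs = (\<Sum>i<N. ?L $$ (i,i))" using sum_roots[of ?L M bs] L_carrier bs M by simp
  obtain j where ej: "E 0 j" using exists_edge by blast
  have j: "j < N" using Ein[OF ej] by simp
  have "?L $$ (0,0) = real (card {k. k < N \<and> E 0 k})" using N2 unfolding laplacian_def by simp
  moreover have "card {k. k < N \<and> E 0 k} \<ge> 1"
  proof -
    have "j \<in> {k. k < N \<and> E 0 k}" using j ej by simp
    hence "{k. k < N \<and> E 0 k} \<noteq> {}" by blast
    moreover have "finite {k. k < N \<and> E 0 k}" by simp
    ultimately show ?thesis by (simp add: Suc_le_eq card_gt_0_iff)
  qed
  ultimately have d0: "?L $$ (0,0) \<ge> 1" by simp
  have "?L $$ (0,0) \<le> (\<Sum>i<N. ?L $$ (i,i))"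
    using N2 by (intro member_le_sum) (auto simp: laplacian_def)
  hence pos: "sum_list (sort bs) > 0" using d0 tr sum_list_sort[of bs] by simp
  show ?thesis
  proof (rule ccontr)
    assume "\<not> ?thesis"
    hence le: "sort bs ! M \<le> 0" using e by simp
    have "sum_list (sort bs) \<le> 0"
    proof (rule sum_list_nonpos)
      fix x assume "x \<in> set (sort bs)"
      then obtain p where p: "p < length (sort bs)" "x = sort bs ! p" by (metis in_set_conv_nth)
      have "sort bs ! p \<le> sort bs ! M" using p bs(2) M by (intro sorted_nth_mono) auto
      thus "x \<le> 0" using p le by simp
    qed
    thus False using pos by simp
  qed
qed

lemma K_root: "poly (char_poly K) c = 0 \<Longrightarrow> c = 0 \<or> c = real N"
proof -
  assume "poly (char_poly K) c = 0"
  hence "eigenvalue K c" using eigenvalue_root_char_poly[OF K_carrier] by simp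
  then obtain v where "eigenvector K v c" unfolding eigenvalue_def by auto
  hence v: "v \<in> carrier_vec N" "v \<noteq> 0\<^sub>v N" "K *\<^sub>v v = c \<cdot>\<^sub>v v" unfolding eigenvector_def using K_carrier by auto
  define S where "S = (\<Sum>j<N. v$j)"
  have row: "real N * v$i - S = c * v$i" if i: "i < N" for i
  proof -
    have "(K *\<^sub>v v) $ i = c * v$i" using v(3) i v(1) by simp
    moreover have "(K *\<^sub>v v) $ i = (\<Sum>j<N. ((if i = j then real N else 0) - 1) * v$j)"
      using i v(1) by (auto simp: K_def scalar_prod_def row_def intro!: sum.cong)
    moreover have "(\<Sum>j<N. ((if i = j then real N else 0) - 1) * v$j) = real N * v$i - S"
    proof -
      have "(\<Sum>j<N. ((if i = j then real N else 0) - 1) * v$j) = (\<Sum>j<N. (if i = j then real N * v$j else 0) - v$j)"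
        by (rule sum.cong) (auto simp: algebra_simps)
      also have "\<dots> = (\<Sum>j<N. if i = j then real N * v$j else 0) - S" unfolding S_def by (rule sum_subtractf)
      also have "(\<Sum>j<N. if i = j then real N * v$j else 0) = real N * v$i" using i by (simp add: sum.delta)
      finally show ?thesis .
    qed
    ultimately show ?thesis by simp
  qed
  obtain i0 where i0: "i0 < N" "v$i0 \<noteq> 0" using v(1,2) by (metis carrier_vecD eq_vecI index_zero_vec(1) index_zero_vec(2))
  show "c = 0 \<or> c = real N"
  proof (cases "c = real N")
    case True thus ?thesis by simp
  next
    case False
    hence nz: "real N - c \<noteq> 0" by simp
    have vi: "v$i = S / (real N - c)" if "i < N" for i
    proof -
      have "v$i * (real N - c) = S" using row[OF that] by (simp add: algebra_simps)
      thus ?thesis using nz by (simp add: field_simps)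
    qed
    have Snz: "S \<noteq> 0" using vi[OF i0(1)] i0(2) by auto
    have "S = (\<Sum>j<N. v$j)" by (simp add: S_def)
    also have "\<dots> = (\<Sum>j<N. S / (real N - c))" by (rule sum.cong) (simp_all add: vi)
    also have "\<dots> = real N * (S / (real N - c))" by simp
    finally have "S * (real N - c) = real N * S" using nz by (simp add: field_simps)
    hence "S * c = 0" by (simp add: algebra_simps)
    thus ?thesis using Snz by simp
  qed
qed

lemma eig_K: "eig K 2 = real N \<and> eig K N = real N"
proof -
  obtain cs where cs: "char_poly K = (\<Prod>b\<leftarrow>cs. [:-b,1:])" "length cs = N"
    using real_sym_char_poly_real[OF K_carrier K_sym] by blast
  define M where "M = N - 2"
  have M: "N = Suc (Suc M)" using N2 unfolding M_def by simp
  define xs where "xs = sort cs"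
  have lx: "length xs = N" and sx: "sorted xs" using cs by (auto simp: xs_def)
  have mem: "x = 0 \<or> x = real N" if "x \<in> set xs" for x
  proof -
    have "x \<in> set cs" using that by (simp add: xs_def)
    hence "poly (char_poly K) x = 0" unfolding cs(1) poly_prod_lin by (auto simp: prod_list_zero_iff)
    thus ?thesis by (rule K_root)
  qed
  have sumx: "sum_list xs = real N * (real N - 1)"
  proof -
    have "sum_list cs = (\<Sum>i<Suc (Suc M). K $$ (i,i))" by (rule sum_roots) (use K_carrier cs M in auto)
    also have "\<dots> = (\<Sum>i<N. real N - 1)" unfolding M[symmetric] by (rule sum.cong) (auto simp: K_def)
    also have "\<dots> = real N * (real N - 1)" by simp
    finally show ?thesis unfolding xs_def sum_list_sort .
  qed
  have nm: "xs ! p = 0 \<or> xs ! p = real N" if "p < N" for p using mem[of "xs!p"] that lx by simp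
  have Npos: "real N > 0" using N2 by simp
  have x1: "xs ! Suc 0 = real N"
  proof (rule ccontr)
    assume "xs ! Suc 0 \<noteq> real N"
    hence x1: "xs ! Suc 0 = 0" using nm[of "Suc 0"] M by auto
    have "xs ! 0 \<le> xs ! Suc 0" using sx lx M by (intro sorted_nth_mono) auto
    hence x0: "xs ! 0 = 0" using nm[of 0] M x1 Npos by auto
    have bnd: "(\<Sum>p<M. xs ! Suc (Suc p)) \<le> of_nat (card {..<M}) * real N"
    proof (rule sum_bounded_above)
      fix p assume "p \<in> {..<M}"
      hence "Suc (Suc p) < N" using M by simp
      thus "xs ! Suc (Suc p) \<le> real N" using nm[of "Suc (Suc p)"] Npos by auto
    qed
    have "sum_list xs = (\<Sum>p<Suc (Suc M). xs ! p)" using lx M by (simp add: sum_list_sum_nth atLeast0LessThan)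
    also have "\<dots> = xs ! 0 + (xs ! Suc 0 + (\<Sum>p<M. xs ! Suc (Suc p)))" by (simp only: sum.lessThan_Suc_shift)
    also have "\<dots> \<le> real M * real N" using x0 x1 bnd by simp
    finally have "real N * (real N - 1) \<le> real M * real N" using sumx by simp
    moreover have "real N - 1 = real M + 1" using M by simp
    ultimately have "real N * (real M + 1) \<le> real N * real M" by (simp add: mult.commute)
    thus False using Npos by (simp add: algebra_simps)
  qed
  have xN: "xs ! (N - 1) = real N"
  proof -
    have "xs ! Suc 0 \<le> xs ! (N - 1)" using sx lx M by (intro sorted_nth_mono) auto
    thus ?thesis using nm[of "N-1"] x1 Npos M by auto
  qed
  have "eig K 2 = xs ! Suc 0" using eig_suc[OF cs(1), of "Suc 0"] by (simp add: xs_def numeral_2_eq_2)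
  moreover have "eig K N = xs ! (N - 1)" using eig_suc[OF cs(1), of "N-1"] M by (simp add: xs_def)
  ultimately show ?thesis using x1 xN by simp
qed

lemma ratio_eq: "dim_row A = N \<Longrightarrow> eigenratio A = eig A (Suc (Suc 0)) / eig A (Suc (N - 1))"
  using N2 by (simp add: eigenratio_def numeral_2_eq_2)

lemma W_dim: "dim_row (W w) = N" by (simp add: W_def)

lemma ratio_lim_top:
  fixes w :: "real \<Rightarrow> nat \<Rightarrow> real" and c :: "nat \<Rightarrow> real"
  assumes lim: "\<And>d. d \<in> {1..D} \<Longrightarrow> ((\<lambda>t. w t d) \<longlongrightarrow> c d) at_top"
    and nz: "eig (W c) (Suc (N-1)) \<noteq> 0"
  shows "((\<lambda>t. eigenratio (W (w t))) \<longlongrightarrow> eigenratio (W c)) at_top"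
proof -
  have m: "Suc 0 < N" "N - 1 < N" using N2 by auto
  have conv: "\<And>i j. i<N \<Longrightarrow> j<N \<Longrightarrow> ((\<lambda>t. W (w t) $$ (i,j)) \<longlongrightarrow> W c $$ (i,j)) at_top"
    by (rule W_tendsto[OF lim])
  have a: "((\<lambda>t. eig (W (w t)) (Suc (Suc 0))) \<longlongrightarrow> eig (W c) (Suc (Suc 0))) at_top"
    using eig_at_top[where A="\<lambda>t. W (w t)" and n=N and m="Suc 0", OF W_carrier W_carrier W_sym W_sym conv m(1)] .
  have b: "((\<lambda>t. eig (W (w t)) (Suc (N-1))) \<longlongrightarrow> eig (W c) (Suc (N-1))) at_top"
    using eig_at_top[where A="\<lambda>t. W (w t)" and n=N and m="N-1", OF W_carrier W_carrier W_sym W_sym conv m(2)] .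
  have "((\<lambda>t. eig (W (w t)) (Suc (Suc 0)) / eig (W (w t)) (Suc (N-1))) \<longlongrightarrow> eig (W c) (Suc (Suc 0)) / eig (W c) (Suc (N-1))) at_top"
    by (rule tendsto_divide[OF a b nz])
  thus ?thesis by (simp only: ratio_eq[OF W_dim])
qed

lemma ratio_lim_right:
  fixes w :: "real \<Rightarrow> nat \<Rightarrow> real" and c :: "nat \<Rightarrow> real"
  assumes lim: "\<And>d. d \<in> {1..D} \<Longrightarrow> ((\<lambda>t. w t d) \<longlongrightarrow> c d) (at_right 0)"
    and nz: "eig (W c) (Suc (N-1)) \<noteq> 0"
  shows "((\<lambda>t. eigenratio (W (w t))) \<longlongrightarrow> eigenratio (W c)) (at_right 0)"
proof -
  have m: "Suc 0 < N" "N - 1 < N" using N2 by auto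
  have conv: "\<And>i j. i<N \<Longrightarrow> j<N \<Longrightarrow> ((\<lambda>t. W (w t) $$ (i,j)) \<longlongrightarrow> W c $$ (i,j)) (at_right 0)"
    by (rule W_tendsto[OF lim])
  have a: "((\<lambda>t. eig (W (w t)) (Suc (Suc 0))) \<longlongrightarrow> eig (W c) (Suc (Suc 0))) (at_right 0)"
    using eig_at_right0[where A="\<lambda>t. W (w t)" and n=N and m="Suc 0", OF W_carrier W_carrier W_sym W_sym conv m(1)] .
  have b: "((\<lambda>t. eig (W (w t)) (Suc (N-1))) \<longlongrightarrow> eig (W c) (Suc (N-1))) (at_right 0)"
    using eig_at_right0[where A="\<lambda>t. W (w t)" and n=N and m="N-1", OF W_carrier W_carrier W_sym W_sym conv m(2)] .
  have "((\<lambda>t. eig (W (w t)) (Suc (Suc 0)) / eig (W (w t)) (Suc (N-1))) \<longlongrightarrow> eig (W c) (Suc (Suc 0)) / eig (W c) (Suc (N-1))) (at_right 0)"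
    by (rule tendsto_divide[OF a b nz])
  thus ?thesis by (simp only: ratio_eq[OF W_dim])
qed

lemma exp_neg_at_top: "(a::real) > 0 \<Longrightarrow> ((\<lambda>t. exp (- (a * t))) \<longlongrightarrow> 0) at_top"
proof -
  assume a: "a > 0"
  have "filterlim (\<lambda>t. a * t) at_top at_top"
    by (rule filterlim_tendsto_pos_mult_at_top[OF tendsto_const a filterlim_ident])
  hence "filterlim (\<lambda>t. - (a * t)) at_bot at_top" by (simp only: filterlim_uminus_at_top)
  thus ?thesis by (rule filterlim_compose[OF exp_at_bot])
qed

theorem main_thm:
  "((\<lambda>s. eigenratio (mellin_laplacian N E s)) \<longlongrightarrow> eigenratio (laplacian N E)) at_top \<and>
     ((\<lambda>s. eigenratio (mellin_laplacian N E s)) \<longlongrightarrow> 1) (at_right 0) \<and>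
     ((\<lambda>lam. eigenratio (laplace_laplacian N E lam)) \<longlongrightarrow> eigenratio (laplacian N E)) at_top \<and>
     ((\<lambda>lam. eigenratio (laplace_laplacian N E lam)) \<longlongrightarrow> 1) (at_right 0)"
proof -
  have SN: "Suc (N - 1) = N" using N2 by simp
  have nzL: "eig (W (\<lambda>d. if d = 1 then 1 else 0)) (Suc (N-1)) \<noteq> 0"
    using eig_L_pos unfolding W_L SN by simp
  have nzK: "eig (W (\<lambda>d. 1)) (Suc (N-1)) \<noteq> 0"
    using eig_K N2 unfolding W_K SN by simp
  have K1: "eigenratio (W (\<lambda>d. 1)) = 1"
    unfolding W_K eigenratio_def using eig_K N2 by (simp add: K_def)
  have lim1: "((\<lambda>s. real d powr (-s)) \<longlongrightarrow> (if d = 1 then 1 else 0)) at_top" if d: "d \<in> {1..D}" for d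
  proof (cases "d = 1")
    case True thus ?thesis by simp
  next
    case False
    hence d2: "real d > 1" using d by auto
    have lnp: "ln (real d) > 0" using d2 by (rule ln_gt_zero)
    have "((\<lambda>t. exp (- (ln (real d) * t))) \<longlongrightarrow> 0) at_top" by (rule exp_neg_at_top[OF lnp])
    moreover have "(\<lambda>s. real d powr (-s)) = (\<lambda>t. exp (- (ln (real d) * t)))"
      using d2 by (intro ext) (simp add: powr_def mult.commute)
    ultimately show ?thesis using False by simp
  qed
  have lim2: "((\<lambda>s. real d powr (-s)) \<longlongrightarrow> 1) (at_right 0)" if d: "d \<in> {1..D}" for d
  proof -
    have "((\<lambda>s. real d powr (-s)) \<longlongrightarrow> real d powr (- 0)) (at_right 0)"
      using d by (intro tendsto_powr tendsto_const tendsto_minus tendsto_ident_at) auto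
    thus ?thesis using d by simp
  qed
  have lim3: "((\<lambda>l. if d = 1 then 1 else exp (- l * real d)) \<longlongrightarrow> (if d = 1 then 1 else 0)) at_top"
    if d: "d \<in> {1..D}" for d
  proof (cases "d = 1")
    case True thus ?thesis by simp
  next
    case False
    have "((\<lambda>t. exp (- (real d * t))) \<longlongrightarrow> 0) at_top" by (rule exp_neg_at_top, use d in simp)
    moreover have "(\<lambda>l. if d = 1 then 1 else exp (- l * real d)) = (\<lambda>t. exp (- (real d * t)))"
      using False by (intro ext) (simp add: mult.commute)
    ultimately show ?thesis using False by simp
  qed
  have lim4: "((\<lambda>l. if d = 1 then 1 else exp (- l * real d)) \<longlongrightarrow> 1) (at_right 0)"
    if d: "d \<in> {1..D}" for d
  proof (cases "d = 1")
    case True thus ?thesis by simp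
  next
    case False
    have "((\<lambda>l. exp (- l * real d)) \<longlongrightarrow> exp (- 0 * real d)) (at_right 0)"
      by (intro tendsto_intros)
    thus ?thesis using False by simp
  qed
  have A: "((\<lambda>s. eigenratio (mellin_laplacian N E s)) \<longlongrightarrow> eigenratio (laplacian N E)) at_top"
    using ratio_lim_top[OF lim1 nzL] unfolding W_L mellin_W .
  have B: "((\<lambda>s. eigenratio (mellin_laplacian N E s)) \<longlongrightarrow> 1) (at_right 0)"
    using ratio_lim_right[OF lim2 nzK] unfolding K1 mellin_W .
  have C: "((\<lambda>lam. eigenratio (laplace_laplacian N E lam)) \<longlongrightarrow> eigenratio (laplacian N E)) at_top"
    using ratio_lim_top[OF lim3 nzL] unfolding W_L laplace_W .
  have D: "((\<lambda>lam. eigenratio (laplace_laplacian N E lam)) \<longlongrightarrow> 1) (at_right 0)"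
    using ratio_lim_right[OF lim4 nzK] unfolding K1 laplace_W .
  show ?thesis using A B C D by blast
qed

end

theorem lemma1:
  fixes N :: nat and E :: "nat \<Rightarrow> nat \<Rightarrow> bool"
  assumes "simple_graph N E" and "connected_graph N E" and "N \<ge> 2"
  shows "((\<lambda>s. eigenratio (mellin_laplacian N E s)) \<longlongrightarrow> eigenratio (laplacian N E)) at_top \<and>
     ((\<lambda>s. eigenratio (mellin_laplacian N E s)) \<longlongrightarrow> 1) (at_right 0) \<and>
     ((\<lambda>lam. eigenratio (laplace_laplacian N E lam)) \<longlongrightarrow> eigenratio (laplacian N E)) at_top \<and>
     ((\<lambda>lam. eigenratio (laplace_laplacian N E lam)) \<longlongrightarrow> 1) (at_right 0)"
    using main_thm[OF assms] .

end
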